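(* Let $N\ge 2$. Consider the encoding of basis states $|k_1,k_2,\dots\rangle$, $k_i\in\mathbb Z_N$, with the convention $k_m=0$ for $m\le 0$: $$|k_1,k_2,\dots\rangle\longmapsto\bigotimes_{i=1}^{+\infty}|k_i+k_{i-2},\;k_i+k_{i-1}+k_{i-2}\rangle,$$ where all additions are modulo $N$ (so input $k_i$ contributes to output registers $2i-1$ and $2i$). Then this quantum convolutional code corrects up to one spin flip error for every four consecutive quantum registers, i.e. it corrects the error set consisting of all operators $\bigotimes_{r\ge1}X_r^{a_r}$ ($a_r\in\mathbb Z_N$) such that among any four consecutive output registers at most one has $a_r\neq 0$.
   Context: Each register is an $N$-state system with orthonormal basis $|j\rangle$, $j\in\mathbb Z_N$; $X_r$ denotes the spin flip $|j\rangle\mapsto|j+1\bmod N\rangle$ on output register $r$. An encoding $|\mathbf k\rangle\mapsto|\mathbf k_{\rm encode}\rangle$ corrects an error set $E$ if for all $\mathcal A,\mathcal B\in E$ and all input labels $\mathbf k,\mathbf k'$: $\langle\mathbf k'_{\rm encode}|\mathcal A^\dagger\mathcal B|\mathbf k_{\rm encode}\rangle=\Lambda_{\mathcal A,\mathcal B}\delta_{\mathbf k\mathbf k'}$ with $\Lambda_{\mathcal A,\mathcal B}\in\mathbb C$ independent of $\mathbf k,\mathbf k'$. *)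

theory Defs
  imports Complex_Main
begin

text \<open>Registers: basis labels of the (infinite) chain of N-state registers are
sequences s :: nat \<Rightarrow> int, register r \<ge> 1 carrying the value s r \<in> {0..<N}
(index 0 is unused and fixed to 0).  Input registers are indexed by i \<ge> 1,
output registers by r \<ge> 1.\<close>

definition input_labels :: "int \<Rightarrow> (nat \<Rightarrow> int) set" where
  "input_labels N = {k. k 0 = 0 \<and> (\<forall>i. 0 \<le> k i \<and> k i < N)}"

definition kval :: "(nat \<Rightarrow> int) \<Rightarrow> int \<Rightarrow> int" where
  "kval k m = (if m \<ge> 1 then k (nat m) else 0)"

text \<open>The encoding: input i contributes to output registers 2i-1 and 2i,
register 2i-1 holds k_i + k_(i-2), register 2i holds k_i + k_(i-1) + k_(i-2) (mod N).\<close>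
definition encode :: "int \<Rightarrow> (nat \<Rightarrow> int) \<Rightarrow> (nat \<Rightarrow> int)" where
  "encode N k r =
     (if r = 0 then 0
      else let i = int ((r + 1) div 2) in
        if odd r then (kval k i + kval k (i - 2)) mod N
        else (kval k i + kval k (i - 1) + kval k (i - 2)) mod N)"

text \<open>Action of the operator Tensor_r X_r^(a r) on a basis label.\<close>
definition apply_X :: "int \<Rightarrow> (nat \<Rightarrow> int) \<Rightarrow> (nat \<Rightarrow> int) \<Rightarrow> (nat \<Rightarrow> int)" where
  "apply_X N a s = (\<lambda>r. (s r + a r) mod N)"

definition basis_inner :: "(nat \<Rightarrow> int) \<Rightarrow> (nat \<Rightarrow> int) \<Rightarrow> complex" where
  "basis_inner s t = (if s = t then 1 else 0)"

text \<open>Matrix element <u| A^dagger B |v> = <A u | B v> for spin-flip operators A, B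
given by exponent sequences a, b.\<close>
definition matrix_elem :: "int \<Rightarrow> (nat \<Rightarrow> int) \<Rightarrow> (nat \<Rightarrow> int) \<Rightarrow> (nat \<Rightarrow> int) \<Rightarrow> (nat \<Rightarrow> int) \<Rightarrow> complex" where
  "matrix_elem N a b u v = basis_inner (apply_X N a u) (apply_X N b v)"

definition error_set :: "int \<Rightarrow> (nat \<Rightarrow> int) set" where
  "error_set N = {a. a 0 = 0 \<and> (\<forall>r. 0 \<le> a r \<and> a r < N) \<and>
                     (\<forall>r\<ge>1. card {j \<in> {r..r+3}. a j \<noteq> 0} \<le> 1)}"

text \<open>Knill--Laflamme error-correction condition.\<close>
definition corrects :: "int \<Rightarrow> ((nat \<Rightarrow> int) \<Rightarrow> (nat \<Rightarrow> int)) \<Rightarrow> (nat \<Rightarrow> int) set \<Rightarrow> (nat \<Rightarrow> int) set \<Rightarrow> bool" where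
  "corrects N enc K E \<longleftrightarrow>
     (\<forall>a\<in>E. \<forall>b\<in>E. \<exists>\<Lambda>::complex. \<forall>k\<in>K. \<forall>k'\<in>K.
        matrix_elem N a b (enc k') (enc k) = \<Lambda> * (if k = k' then 1 else 0))"

end

theory Submission
  imports Defs
begin

lemma enc_odd: "j \<ge> 1 \<Longrightarrow> encode N k (2*j - 1) = (kval k (int j) + kval k (int j - 2)) mod N"
  unfolding encode_def
  by (auto simp: Let_def)

lemma enc_even: "j \<ge> 1 \<Longrightarrow> encode N k (2*j) = (kval k (int j) + kval k (int j - 1) + kval k (int j - 2)) mod N"
  unfolding encode_def by (simp add: Let_def)

lemma enc_odd2: "encode N k (2*j + 1) = (kval k (int j + 1) + kval k (int j - 1)) mod N"
  unfolding encode_def by (simp add: Let_def algebra_simps)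

lemma enc_even2: "encode N k (2*j + 2) = (kval k (int j + 1) + kval k (int j) + kval k (int j - 1)) mod N"
proof -
  have "(2*j+2+1) div 2 = j + 1" by simp
  then show ?thesis unfolding encode_def by (simp add: Let_def algebra_simps)
qed

lemma kval_j: "j \<ge> 1 \<Longrightarrow> kval k (int j) = k j"
  unfolding kval_def by simp

lemma kval_lt: assumes "\<forall>i<j. k i = k' i" "m < int j" shows "kval k m = kval k' m"
  using assms unfolding kval_def by auto

lemma card2: fixes r :: nat assumes "card {j \<in> {r..r+3}. a j \<noteq> (0::int)} \<le> 1" "p \<in> {r..r+3}" "q \<in> {r..r+3}"
  "p \<noteq> q" "a p \<noteq> 0" "a q \<noteq> 0" shows False
proof -
  have "{p,q} \<subseteq> {j \<in> {r..r+3}. a j \<noteq> 0}" using assms by auto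
  then have "card {p,q} \<le> card {j \<in> {r..r+3}. a j \<noteq> 0}" by (intro card_mono) auto
  then show False using assms by simp
qed

lemma main:
  assumes N: "N \<ge> 2" and k: "k \<in> input_labels N" and k': "k' \<in> input_labels N" and kk: "k \<noteq> k'"
    and a: "a \<in> error_set N" and b: "b \<in> error_set N"
    and eq: "apply_X N a (encode N k') = apply_X N b (encode N k)"
  shows False
proof -
  have "\<exists>j. k j \<noteq> k' j" using kk by auto
  then obtain j where j: "k j \<noteq> k' j" and jm: "\<forall>i<j. k i = k' i"
    using exists_least_iff[of "\<lambda>j. k j \<noteq> k' j"] by auto
  have j1: "j \<ge> 1" using j k k' unfolding input_labels_def by (cases j) auto
  define D where "D m = kval k' m - kval k m" for m
  define e where "e r = b r - a r" for r
  have E: "N dvd (encode N k' r - encode N k r - e r)" for r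
  proof -
    have "(encode N k' r + a r) mod N = (encode N k r + b r) mod N"
      using fun_cong[OF eq, of r] unfolding apply_X_def by simp
    then have "N dvd ((encode N k' r + a r) - (encode N k r + b r))"
      by (simp add: mod_eq_dvd_iff)
    then show ?thesis unfolding e_def by (simp add: algebra_simps)
  qed
  have Dz: "D m = 0" if "m < int j" for m
    using kval_lt[OF jm that] unfolding D_def by simp
  have Dj: "\<not> N dvd D j"
  proof
    assume "N dvd D j"
    then have "N dvd (k' j - k j)" unfolding D_def using kval_j[OF j1] by simp
    then have "k' j mod N = k j mod N" by (simp add: mod_eq_dvd_iff)
    moreover have "0 \<le> k j" "k j < N" "0 \<le> k' j" "k' j < N"
      using k k' unfolding input_labels_def by auto
    ultimately show False using j by simp
  qed
  have md: "N dvd (x mod N - y mod N - z) \<longleftrightarrow> N dvd (x - y - z)" for x y z :: int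
    by (metis (no_types) mod_diff_left_eq mod_diff_right_eq dvd_eq_mod_eq_0 diff_diff_eq)
  have d1: "N dvd (D j - e (2*j-1))"
    using E[of "2*j-1"] unfolding enc_odd[OF j1] md D_def
    using Dz[of "int j - 2"] unfolding D_def by (simp add: algebra_simps)
  have d2: "N dvd (D j - e (2*j))"
    using E[of "2*j"] unfolding enc_even[OF j1] md
    using Dz[of "int j - 2"] Dz[of "int j - 1"] unfolding D_def by (simp add: algebra_simps)
  have d3: "N dvd (D (j+1) - e (2*j+1))"
    using E[of "2*j+1"] unfolding enc_odd2 md
    using Dz[of "int j - 1"] unfolding D_def by (simp add: algebra_simps)
  have d4: "N dvd (D (j+1) + D j - e (2*j+2))"
    using E[of "2*j+2"] unfolding enc_even2 md
    using Dz[of "int j - 1"] unfolding D_def by (simp add: algebra_simps)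
  have e1: "e (2*j-1) \<noteq> 0" using d1 Dj by auto
  have e2: "e (2*j) \<noteq> 0" using d2 Dj by auto
  have ca: "card {r \<in> {2*j-1..2*j-1+3}. a r \<noteq> 0} \<le> 1" and cb: "card {r \<in> {2*j-1..2*j-1+3}. b r \<noteq> 0} \<le> 1"
    using a b j1 unfolding error_set_def by (auto dest!: spec[of _ "2*j-1"])
  have ab1: "a (2*j-1) \<noteq> 0 \<or> b (2*j-1) \<noteq> 0" using e1 unfolding e_def by auto
  have ab2: "a (2*j) \<noteq> 0 \<or> b (2*j) \<noteq> 0" using e2 unfolding e_def by auto
  have z: "a r = 0 \<and> b r = 0" if "r = 2*j+1 \<or> r = 2*j+2" for r
  proof (rule ccontr)
    assume "\<not> (a r = 0 \<and> b r = 0)"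
    have m: "2*j-1 \<in> {2*j-1..2*j-1+3}" "2*j \<in> {2*j-1..2*j-1+3}" "r \<in> {2*j-1..2*j-1+3}"
      "2*j-1 \<noteq> r" "2*j \<noteq> r" "2*j-1 \<noteq> 2*j" using that j1 by auto
    consider "a r \<noteq> 0" | "b r \<noteq> 0" using \<open>\<not> (a r = 0 \<and> b r = 0)\<close> by blast
    then show False
    proof cases
      case 1
      have "a (2*j-1) = 0" using card2[OF ca _ _ _ _ 1, of "2*j-1"] m by blast
      moreover have "a (2*j) = 0" using card2[OF ca _ _ _ _ 1, of "2*j"] m by blast
      ultimately show False using ab1 ab2 card2[OF cb, of "2*j-1" "2*j"] m by blast
    next
      case 2
      have "b (2*j-1) = 0" using card2[OF cb _ _ _ _ 2, of "2*j-1"] m by blast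
      moreover have "b (2*j) = 0" using card2[OF cb _ _ _ _ 2, of "2*j"] m by blast
      ultimately show False using ab1 ab2 card2[OF ca, of "2*j-1" "2*j"] m by blast
    qed
  qed
  have "e (2*j+1) = 0" "e (2*j+2) = 0" using z unfolding e_def by auto
  then have "N dvd D (j+1)" "N dvd D (j+1) + D j" using d3 d4 by auto
  then have "N dvd D j" by (metis add_diff_cancel_left' dvd_diff)
  then show False using Dj by simp
qed

lemma same:
  assumes a: "a \<in> error_set N" and b: "b \<in> error_set N"
    and eq: "apply_X N a s = apply_X N b s"
  shows "a = b"
proof
  fix r
  have "(s r + a r) mod N = (s r + b r) mod N" using fun_cong[OF eq, of r] unfolding apply_X_def by simp
  then have "a r mod N = b r mod N" by (metis mod_add_left_eq add.commute mod_add_cong mod_mod_trivial add_diff_cancel_left' mod_diff_cong)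
  moreover have "0 \<le> a r" "a r < N" "0 \<le> b r" "b r < N" using a b unfolding error_set_def by auto
  ultimately show "a r = b r" by simp
qed

theorem lemma3:
  fixes N :: int
  assumes "N \<ge> 2"
  shows "corrects N (encode N) (input_labels N) (error_set N)"
  unfolding corrects_def
proof (intro ballI)
  fix a b assume a: "a \<in> error_set N" and b: "b \<in> error_set N"
  show "\<exists>\<Lambda>::complex. \<forall>k\<in>input_labels N. \<forall>k'\<in>input_labels N.
        matrix_elem N a b (encode N k') (encode N k) = \<Lambda> * (if k = k' then 1 else 0)"
  proof (intro exI[of _ "if a = b then 1 else 0"] ballI)
    fix k k' assume k: "k \<in> input_labels N" and k': "k' \<in> input_labels N"
    show "matrix_elem N a b (encode N k') (encode N k) = (if a = b then 1 else 0) * (if k = k' then 1 else 0)"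
    proof (cases "k = k'")
      case True
      then show ?thesis using same[OF a b, of "encode N k"] unfolding matrix_elem_def basis_inner_def by auto
    next
      case False
      then show ?thesis using main[OF assms k k' False a b] unfolding matrix_elem_def basis_inner_def by auto
    qed
  qed
qed

end
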